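(* The function $h(s) = s\,\dfrac{\theta_o'(s)}{\theta_o(s)}$, $s>0$, is strictly decreasing on $[1/4,\infty)$, and satisfies $h(s) \ge \dfrac{\theta_o'(1)}{\theta_o(1)}$ for all $0 < s \le 1/4$.
   Context: For $s>0$, $\theta_o(s) = \sum_{k\in\mathbb{Z}} e^{-\pi (2k+1)^2 s}$. *)

theory Defs
  imports "HOL-Analysis.Analysis"
begin

definition theta_o :: "real \<Rightarrow> real" where
  "theta_o s = (\<Sum>\<^sub>\<infinity>k\<in>(UNIV::int set). exp (- pi * (2 * of_int k + 1)^2 * s))"

definition h_fun :: "real \<Rightarrow> real" where
  "h_fun s = s * deriv theta_o s / theta_o s"

end

theory Submission
  imports Defs
begin

lemma y_le_exp_half: "0 \<le> (y::real) \<Longrightarrow> y \<le> exp (y/2)"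
proof -
  assume y: "0 \<le> y"
  have "1 + y/2 + (y/2)^2/2 \<le> exp (y/2)" using exp_lower_Taylor_quadratic[of "y/2"] y by simp
  moreover have "y \<le> 1 + y/2 + (y/2)^2/2"
  proof -
    have "0 \<le> (y-2)^2" by simp
    then show ?thesis by (simp add: power2_eq_square algebra_simps)
  qed
  ultimately show ?thesis by linarith
qed

lemma yexp_bound: "0 \<le> (y::real) \<Longrightarrow> y * exp (-y) \<le> exp (-y/2)"
proof -
  assume y: "0 \<le> y"
  have "y * exp (-y) \<le> exp (y/2) * exp (-y)" using y_le_exp_half[OF y] by simp
  also have "\<dots> = exp (-y/2)" by (simp flip: exp_add)
  finally show ?thesis .
qed

definition w :: "nat \<Rightarrow> real \<Rightarrow> real" where "w n s = exp (- pi * (2 * real n + 1)^2 * s)"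
definition q :: "nat \<Rightarrow> real" where "q n = (2 * real n + 1)^2"

lemma w_q: "w n s = exp (- pi * q n * s)" by (simp add: w_def q_def)
lemma q_ge: "real n \<le> q n" "1 \<le> q n" by (auto simp: q_def power2_eq_square algebra_simps)
lemma w_pos: "0 < w n s" by (simp add: w_def)

lemma qw_bound:
  assumes "0 < a" "a \<le> x"
  shows "q n * w n x \<le> (1/(pi*a)) * exp (-pi*a/2) ^ n"
proof -
  have "q n * w n x \<le> q n * w n a"
    using assms q_ge[of n] by (auto simp: w_q intro!: mult_left_mono)
  also have "\<dots> = (1/(pi*a)) * ((pi*a*q n) * exp (-(pi*a*q n)))"
    using assms by (simp add: w_q field_simps)
  also have "\<dots> \<le> (1/(pi*a)) * exp (-(pi*a*q n)/2)"
    using assms q_ge[of n] by (intro mult_left_mono yexp_bound) auto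
  also have "\<dots> \<le> (1/(pi*a)) * exp (-(pi*a*real n)/2)"
    using assms q_ge[of n] by (intro mult_left_mono) auto
  also have "exp (-(pi*a*real n)/2) = exp (-pi*a/2) ^ n"
    by (subst exp_of_nat_mult[symmetric]) (simp add: algebra_simps)
  finally show ?thesis .
qed

lemma geo_summable: "0 < a \<Longrightarrow> summable (\<lambda>n. (c::real) * exp (-pi*a/2) ^ n)"
  by (intro summable_mult summable_geometric) auto

lemma summable_qw: "0 < x \<Longrightarrow> summable (\<lambda>n. q n * w n x)"
proof (rule summable_comparison_test'[OF geo_summable[of x "1/(pi*x)"], of 0])
  fix n assume "0 < x"
  moreover have "0 \<le> q n * w n x" using q_ge[of n] w_pos[of n x] by simp
  ultimately show "norm (q n * w n x) \<le> 1/(pi*x) * exp (-pi*x/2) ^ n"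
    using qw_bound[of x x n] by simp
qed

lemma summable_w: "0 < x \<Longrightarrow> summable (\<lambda>n. w n x)"
proof (rule summable_comparison_test'[OF summable_qw[of x], of 0])
  fix n assume "0 < x"
  have "w n x \<le> q n * w n x" using q_ge[of n] w_pos[of n x] by simp
  then show "norm (w n x) \<le> q n * w n x" using w_pos[of n x] by simp
qed



definition T :: "real \<Rightarrow> real" where "T x = (\<Sum>n. w n x)"
definition D :: "real \<Rightarrow> real" where "D x = (\<Sum>n. q n * w n x)"

lemma theta_eq: assumes s: "0 < s" shows "theta_o s = 2 * T s"
proof -
  define f where "f = (\<lambda>k::int. exp (- pi * (2 * of_int k + 1)^2 * s))"
  have hs: "((\<lambda>n. w n s) has_sum T s) UNIV"
    unfolding T_def using summable_w[OF s] w_pos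
    by (intro sums_nonneg_imp_has_sum) (auto simp: less_imp_le)
  have 1: "(f has_sum T s) (range int)"
  proof -
    have "(f \<circ> int) = (\<lambda>n. w n s)" by (auto simp: f_def w_def)
    then show ?thesis using has_sum_reindex[of int UNIV f "T s"] hs by simp
  qed
  have 2: "(f has_sum T s) (range (\<lambda>n. - int n - 1))"
  proof -
    have inj: "inj (\<lambda>n::nat. - int n - 1)" by (auto simp: inj_def)
    have "(f \<circ> (\<lambda>n. - int n - 1)) = (\<lambda>n. w n s)"
    proof
      fix n
      have "(2 * (- real n - 1) + 1)^2 = (2 * real n + 1)^2" by (simp add: power2_eq_square algebra_simps)
      then show "(f \<circ> (\<lambda>n. - int n - 1)) n = w n s" by (simp add: f_def w_def)
    qed
    then show ?thesis using has_sum_reindex[OF inj[unfolded inj_on_def[symmetric]], of f "T s"] hs by simp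
  qed
  have disj: "range int \<inter> range (\<lambda>n. - int n - 1) = {}" by auto
  have un: "range int \<union> range (\<lambda>n. - int n - 1) = UNIV"
  proof (rule set_eqI, rule iffI)
    fix k :: int
    show "k \<in> range int \<union> range (\<lambda>n. - int n - 1)"
    proof (cases "0 \<le> k")
      case True then have "k = int (nat k)" by simp
      then show ?thesis by blast
    next
      case False then have "k = - int (nat (-k-1)) - 1" by simp
      then show ?thesis by blast
    qed
  qed simp
  have "(f has_sum (T s + T s)) UNIV" using has_sum_Un_disjoint[OF 1 2 disj] un by simp
  then have "infsum f UNIV = 2 * T s" by (simp add: infsumI)
  then show ?thesis by (simp add: theta_o_def f_def)
qed

lemma deriv_theta: assumes s: "0 < s" shows "deriv theta_o s = - pi * 2 * D s"
proof -
  define S where "S = {s/2<..}"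
  have S: "convex S" "open S" "s \<in> S" using s by (auto simp: S_def)
  have intS: "interior S = S" using S(2) by (rule interior_open)
  have der: "\<And>n x. x \<in> S \<Longrightarrow> ((\<lambda>x. w n x) has_field_derivative (- pi * q n * w n x)) (at x within S)"
    unfolding w_q by (auto intro!: derivative_eq_intros)
  have "uniform_limit S (\<lambda>n x. \<Sum>i<n. - pi * q i * w i x) (\<lambda>x. \<Sum>i. - pi * q i * w i x) sequentially"
  proof (rule Weierstrass_m_test[OF _ geo_summable[of "s/2" "pi * (1/(pi*(s/2)))"]])
    fix n x assume "x \<in> S"
    then have x: "s/2 \<le> x" by (simp add: S_def)
    have "norm (- pi * q n * w n x) = pi * (q n * w n x)" using q_ge[of n] w_pos[of n x] by simp
    also have "\<dots> \<le> pi * ((1/(pi*(s/2))) * exp (-pi*(s/2)/2) ^ n)"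
      using qw_bound[of "s/2" x n] s x by (intro mult_left_mono) auto
    finally show "norm (- pi * q n * w n x) \<le> pi * (1/(pi*(s/2))) * exp (-pi*(s/2)/2) ^ n" by simp
  qed (use s in auto)
  then have uc: "uniformly_convergent_on S (\<lambda>n x. \<Sum>i<n. - pi * q i * w i x)"
    unfolding uniformly_convergent_on_def by blast
  have "((\<lambda>x. \<Sum>n. w n x) has_field_derivative (\<Sum>n. - pi * q n * w n s)) (at s)"
    using has_field_derivative_series'(2)[OF S(1) der uc S(3) summable_w[OF s]] S intS by simp
  then have "((\<lambda>x. 2 * T x) has_field_derivative 2 * (\<Sum>n. - pi * q n * w n s)) (at s)"
    unfolding T_def by (intro derivative_eq_intros) auto
  then have "(theta_o has_field_derivative 2 * (\<Sum>n. - pi * q n * w n s)) (at s)"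
    by (rule has_field_derivative_transform_within_open[of _ _ _ "{0<..}"]) (use s theta_eq in auto)
  then have "deriv theta_o s = 2 * (\<Sum>n. - pi * q n * w n s)" by (rule DERIV_imp_deriv)
  also have "(\<Sum>n. - pi * q n * w n s) = - pi * D s"
    unfolding D_def using suminf_mult[OF summable_qw[OF s], of "-pi"] by (simp add: mult.assoc)
  finally show ?thesis by simp
qed

lemma T_pos: "0 < x \<Longrightarrow> 0 < T x"
  unfolding T_def using suminf_pos[OF summable_w] w_pos by blast

lemma h_eq: "0 < s \<Longrightarrow> h_fun s = - pi * (s * D s / T s)"
  using T_pos[of s] by (simp add: h_fun_def deriv_theta theta_eq)



lemma small_term_pos:
  assumes y: "0 \<le> (y::real)"
  shows "((y+1)^2 - 1) * exp (-pi*(y+1)^2) \<le> exp (-pi) * exp (-2*pi*y)"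
proof -
  have e: "exp (-pi*(y+1)^2) = exp (-pi) * exp (-2*pi*y) * exp (-pi*y^2)"
    by (simp add: exp_add[symmetric] power2_eq_square algebra_simps)
  have "1 + pi*y^2 \<le> exp (pi*y^2)" using exp_ge_add_one_self by simp
  moreover have "3*y^2 \<le> pi*y^2" using pi_gt3 by (intro mult_right_mono) auto
  moreover have "0 \<le> (y-1)^2 + y^2" by simp
  moreover have "(y-1)^2 + y^2 = 2*y^2 - 2*y + 1" by (simp add: power2_eq_square algebra_simps)
  moreover have "(y+1)^2 - 1 = y^2 + 2*y" by (simp add: power2_eq_square algebra_simps)
  ultimately have "(y+1)^2 - 1 \<le> exp (pi*y^2)" by linarith
  then have "((y+1)^2 - 1) * exp (-pi*y^2) \<le> exp (pi*y^2) * exp (-pi*y^2)"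
    by (intro mult_right_mono) auto
  also have "\<dots> = 1" by (simp flip: exp_add)
  finally have 1: "((y+1)^2 - 1) * exp (-pi*y^2) \<le> 1" .
  have "((y+1)^2 - 1) * exp (-pi*(y+1)^2) = (exp (-pi) * exp (-2*pi*y)) * (((y+1)^2 - 1) * exp (-pi*y^2))"
    unfolding e by (simp add: algebra_simps)
  also have "\<dots> \<le> (exp (-pi) * exp (-2*pi*y)) * 1"
    by (intro mult_left_mono 1) auto
  finally show ?thesis by simp
qed

lemma geom_le: assumes u: "0 < (u::real)" shows "1 / (1 - exp (-u)) \<le> 1 + 1/u"
proof -
  have "1 + u \<le> exp u" by (rule exp_ge_add_one_self)
  then have "exp (-u) \<le> 1/(1+u)" using u by (simp add: exp_minus field_simps)
  then have "u/(1+u) \<le> 1 - exp (-u)" using u by (simp add: field_simps)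
  moreover have "0 < u/(1+u)" using u by simp
  ultimately have "1 / (1 - exp (-u)) \<le> 1 / (u/(1+u))"
    by (intro divide_left_mono mult_pos_pos) (use u in auto)
  also have "\<dots> = 1 + 1/u" using u by (simp add: field_simps)
  finally show ?thesis .
qed

lemma aux_lin: "((z::real) - 1)/2 \<le> a \<Longrightarrow> a \<le> b \<Longrightarrow> z \<le> 2*b+1" by (simp add: field_simps)
lemma aux_lin3: "(a::real) + 1 \<le> (Y + 1)/2 \<Longrightarrow> 2*a+1 \<le> Y" by (simp add: field_simps)
lemma aux_lin2: "(a::real) < (z - 1)/2 \<Longrightarrow> 2*a+1 < z" by (simp add: field_simps)

lemma small_s:
  assumes s: "0 < s" "s \<le> 1/4"
  shows "s * D s \<le> T s"
proof -
  define r where "r = sqrt s"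
  have "sqrt s \<le> sqrt ((1/2)^2)" using s by (intro real_sqrt_le_mono) (simp add: power2_eq_square)
  then have r: "0 < r" "r \<le> 1/2" "r^2 = s" using s by (auto simp: r_def)
  define x where "x n = (2 * real n + 1) * r" for n
  define Y where "Y = 1/(2*r)"
  have Y: "1 \<le> Y" using r by (simp add: Y_def field_simps)
  define N0 where "N0 = nat \<lceil>(1/r - 1)/2\<rceil>"
  define K where "K = nat \<lfloor>(Y+1)/2\<rfloor>"
  define A where "A = 3/4 * exp (-pi/4)"
  define \<rho> where "\<rho> = exp (-4*pi*r)"
  define t where "t n = (q n * s - 1) * w n s" for n
  define c where "c n = (if N0 \<le> n then exp (-pi) * \<rho>^(n-N0) else 0) - (if n < K then A else 0)" for n
  have tx: "t n = ((x n)^2 - 1) * exp (-pi * (x n)^2)" for n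
    unfolding t_def x_def w_q q_def using r(3) by (simp add: power_mult_distrib mult.assoc)
  have f1: "1 \<le> x n" if "N0 \<le> n" for n
  proof -
    have "(1/r - 1)/2 \<le> real N0" unfolding N0_def by linarith
    moreover have "real N0 \<le> real n" using that by simp
    ultimately have "1/r \<le> 2 * real n + 1" using aux_lin by blast
    then show ?thesis using r unfolding x_def by (simp add: field_simps)
  qed
  have f2: "x n < 1" if "\<not> N0 \<le> n" for n
  proof -
    have "int n < \<lceil>(1/r - 1)/2\<rceil>" using that unfolding N0_def by linarith
    then have "real n < (1/r - 1)/2" by (simp add: less_ceiling_iff)
    then have "2 * real n + 1 < 1/r" by (rule aux_lin2)
    then show ?thesis using r unfolding x_def by (simp add: field_simps)
  qed
  have f3: "x n \<le> 1/2" if "n < K" for n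
  proof -
    have "int (n+1) \<le> \<lfloor>(Y+1)/2\<rfloor>" using that unfolding K_def by linarith
    then have "real n + 1 \<le> (Y+1)/2" by (simp add: le_floor_iff)
    then have "2 * real n + 1 \<le> 1/(2*r)" unfolding Y_def[symmetric] by (rule aux_lin3)
    then show ?thesis using r unfolding x_def by (simp add: field_simps)
  qed
  have f4: "(Y+1)/4 \<le> real K"
  proof -
    have a: "(Y+1)/2 - 1 < real K" unfolding K_def using Y by linarith
    have "1 \<le> (Y+1)/2" using Y by (simp add: field_simps)
    then have "1 \<le> \<lfloor>(Y+1)/2\<rfloor>" by (simp add: le_floor_iff)
    then have b: "1 \<le> real K" unfolding K_def by linarith
    show ?thesis using a b by linarith
  qed
  have tc: "t n \<le> c n" for n
  proof (cases "N0 \<le> n")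
    case True
    have nK: "\<not> n < K" using f1[OF True] f3 by force
    define y where "y = x n - 1"
    have y: "0 \<le> y" using f1[OF True] by (simp add: y_def)
    have "t n \<le> exp (-pi) * exp (-2*pi*y)"
      using small_term_pos[OF y] unfolding tx y_def by simp
    also have "\<dots> \<le> exp (-pi) * \<rho>^(n-N0)"
    proof -
      have "1 \<le> x N0" using f1 by simp
      then have "2 * r * (real n - real N0) \<le> y" unfolding y_def x_def by (simp add: algebra_simps)
      then have "-2*pi*y \<le> real (n-N0) * (-4*pi*r)" using True
        by (simp add: of_nat_diff)
      then have "exp (-2*pi*y) \<le> exp (real (n-N0) * (-4*pi*r))" by (simp only: exp_le_cancel_iff)
      also have "exp (real (n-N0) * (-4*pi*r)) = \<rho>^(n-N0)" unfolding \<rho>_def by (rule exp_of_nat_mult)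
      finally show ?thesis by (intro mult_left_mono) auto
    qed
    finally show ?thesis using True nK unfolding c_def by simp
  next
    case False
    have x1: "x n < 1" using f2[OF False] by simp
    have x0: "0 \<le> x n" using r unfolding x_def by simp
    show ?thesis
    proof (cases "n < K")
      case True
      have xh: "x n \<le> 1/2" using f3[OF True] .
      have "(x n)^2 \<le> (1/2)^2" using xh x0 by (intro power_mono) auto
      then have "(x n)^2 - 1 \<le> -3/4" "exp (-pi/4) \<le> exp (-pi * (x n)^2)" by (auto simp: power2_eq_square)
      then have "((x n)^2 - 1) * exp (-pi * (x n)^2) \<le> -3/4 * exp (-pi/4)"
      proof -
        assume h1: "(x n)^2 - 1 \<le> -3/4" and h2: "exp (-pi/4) \<le> exp (-pi * (x n)^2)"
        have "((x n)^2 - 1) * exp (-pi * (x n)^2) \<le> (-3/4) * exp (-pi * (x n)^2)"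
          using h1 by (intro mult_right_mono) auto
        also have "\<dots> \<le> (-3/4) * exp (-pi/4)" using h2 by simp
        finally show ?thesis .
      qed
      then show ?thesis using False True unfolding tx c_def A_def by simp
    next
      case nK: False
      have "(x n)^2 \<le> 1" using x0 x1 by (simp add: power_le_one)
      then have "((x n)^2 - 1) * exp (-pi * (x n)^2) \<le> 0" by (simp add: mult_nonpos_nonneg)
      then show ?thesis using False nK unfolding tx c_def by simp
    qed
  qed
  have \<rho>: "0 < \<rho>" "\<rho> < 1" using r unfolding \<rho>_def by auto
  have sum1: "(\<lambda>n. if N0 \<le> n then exp (-pi) * \<rho>^(n-N0) else 0) sums (exp (-pi) * (1/(1-\<rho>)))"
  proof -
    have "(\<lambda>i. exp (-pi) * \<rho>^i) sums (exp (-pi) * (1/(1-\<rho>)))"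
      using geometric_sums[of \<rho>] \<rho> by (intro sums_mult) auto
    then have "(\<lambda>i. (\<lambda>n. if N0 \<le> n then exp (-pi) * \<rho>^(n-N0) else 0) (i + N0)) sums (exp (-pi) * (1/(1-\<rho>)))"
      by simp
    then show ?thesis by (subst (asm) sums_iff_shift) simp
  qed
  have sum2: "(\<lambda>n. if n < K then A else 0) sums (real K * A)"
  proof -
    have "(\<lambda>n. if n < K then A else 0) sums (\<Sum>n\<in>{..<K}. (if n < K then A else 0))"
      by (rule sums_finite) auto
    then show ?thesis by simp
  qed
  have csum: "c sums (exp (-pi) * (1/(1-\<rho>)) - real K * A)"
    unfolding c_def by (rule sums_diff[OF sum1 sum2])
  have tsum: "summable t" unfolding t_def
    using summable_diff[OF summable_mult[OF summable_qw[OF s(1)], of s] summable_w[OF s(1)]]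
    by (simp add: algebra_simps)
  have "suminf t \<le> exp (-pi) * (1/(1-\<rho>)) - real K * A"
    using suminf_le[OF tc tsum sums_summable[OF csum]] sums_unique[OF csum] by simp
  also have "\<dots> \<le> 0"
  proof -
    have g1: "1/(1-\<rho>) \<le> 1 + 1/(4*pi*r)" unfolding \<rho>_def using geom_le[of "4*pi*r"] r by simp
    have g2: "1/(4*pi*r) = Y / (2*pi)" unfolding Y_def by simp
    have g3: "Y/(2*pi) \<le> Y" using Y pi_gt3 by (simp add: field_simps)
    have "1/(1-\<rho>) \<le> 1 + Y" using g1 g2 g3 by linarith
    then have a: "exp (-pi) * (1/(1-\<rho>)) \<le> exp (-pi) * (1 + Y)" by (intro mult_left_mono) auto
    have b: "A * ((Y+1)/4) \<le> A * real K" using f4 unfolding A_def by (intro mult_left_mono) auto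
    have c: "16 * exp (-pi) \<le> 3 * exp (-pi/4)"
    proof -
      have "1 + 3*pi/4 + (3*pi/4)^2/2 \<le> exp (3*pi/4)" by (rule exp_lower_Taylor_quadratic) simp
      moreover have "(9/4)^2 \<le> (3*pi/4)^2" using pi_gt3 by (intro power_mono) auto
      ultimately have "16/3 \<le> exp (3*pi/4)" using pi_gt3 by (simp add: power2_eq_square)
      then have "16/3 * exp (-pi) \<le> exp (3*pi/4) * exp (-pi)" by (intro mult_right_mono) auto
      also have "\<dots> = exp (-pi/4)" by (simp flip: exp_add)
      finally show ?thesis by simp
    qed
    have "exp (-pi) * (1 + Y) \<le> (3 * exp (-pi/4) / 16) * (1 + Y)"
      using c Y by (intro mult_right_mono) auto
    also have "\<dots> = A * ((Y+1)/4)" unfolding A_def by (simp add: field_simps)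
    finally have "exp (-pi) * (1 + Y) \<le> A * ((Y+1)/4)" .
    then show ?thesis using a b by (simp add: mult.commute)
  qed
  finally have "suminf t \<le> 0" .
  moreover have "suminf t = s * D s - T s"
    unfolding t_def D_def T_def
    using suminf_mult[OF summable_qw[OF s(1)], of s] suminf_diff[OF summable_mult[OF summable_qw[OF s(1)], of s] summable_w[OF s(1)]]
    by (simp add: algebra_simps)
  ultimately show ?thesis by simp
qed



definition v :: "nat \<Rightarrow> real \<Rightarrow> real" where "v n x = exp (- pi * (q n - 1) * x)"
definition a :: "nat \<Rightarrow> real" where "a n = q n - 1"

lemma w_v: "w n x = exp (-pi*x) * v n x"
  by (simp add: w_q v_def exp_add[symmetric] algebra_simps)
lemma v_w: "v n x = exp (pi*x) * w n x"
  by (simp add: w_v exp_add[symmetric])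
lemma a_nonneg: "0 \<le> a n" using q_ge[of n] by (simp add: a_def)
lemma v_pos: "0 < v n x" by (simp add: v_def)

lemma summable_v: "0 < x \<Longrightarrow> summable (\<lambda>n. v n x)"
  unfolding v_w by (intro summable_mult summable_w)
lemma summable_av: "0 < x \<Longrightarrow> summable (\<lambda>n. a n * v n x)"
proof -
  assume x: "0 < x"
  have "summable (\<lambda>n. exp (pi*x) * (q n * w n x) - exp (pi*x) * w n x)"
    by (intro summable_diff summable_mult summable_qw summable_w x)
  moreover have "(\<lambda>n. exp (pi*x) * (q n * w n x) - exp (pi*x) * w n x) = (\<lambda>n. a n * v n x)"
    by (auto simp: a_def v_w algebra_simps)
  ultimately show ?thesis by simp
qed

lemma ratio_eq:
  assumes x: "0 < x"
  shows "x * D x / T x = x + x * (\<Sum>n. a n * v n x) / (\<Sum>n. v n x)"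
proof -
  have Tv: "T x = exp (-pi*x) * (\<Sum>n. v n x)"
    unfolding T_def w_v by (rule suminf_mult[OF summable_v[OF x]])
  have "D x = (\<Sum>n. exp (-pi*x) * (v n x + a n * v n x))"
    unfolding D_def w_v by (simp add: a_def algebra_simps)
  also have "\<dots> = exp (-pi*x) * (\<Sum>n. v n x + a n * v n x)"
    by (intro suminf_mult summable_add summable_v summable_av x)
  also have "(\<Sum>n. v n x + a n * v n x) = (\<Sum>n. v n x) + (\<Sum>n. a n * v n x)"
    by (intro suminf_add[symmetric] summable_v summable_av x)
  finally have Dv: "D x = exp (-pi*x) * ((\<Sum>n. v n x) + (\<Sum>n. a n * v n x))" .
  have pos: "0 < (\<Sum>n. v n x)" using suminf_pos[OF summable_v[OF x]] v_pos by blast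
  show ?thesis unfolding Tv Dv using pos by (simp add: field_simps)
qed

lemma phi_lip:
  fixes s t b :: real
  assumes st: "1/4 \<le> s" "s \<le> t" and b: "0 \<le> b"
  shows "s * exp (-b* s) - t * exp (-b*t) \<le> exp (-b/8) * (t - s)"
proof -
  define L where "L = exp (-b/8)"
  define \<psi> where "\<psi> x = x * exp (-b*x) + L * x" for x
  have "\<psi> s \<le> \<psi> t"
  proof (rule DERIV_nonneg_imp_increasing_open[of s t \<psi>])
    show "s \<le> t" using st by simp
  next
    fix x assume x: "s < x" "x < t"
    have d: "DERIV \<psi> x :> exp (-b*x) + x * (exp (-b*x) * (-b)) + L"
      unfolding \<psi>_def by (auto intro!: derivative_eq_intros)
    have "(b*x) * exp (-(b*x)) \<le> exp (-(b*x)/2)" using b x st by (intro yexp_bound) auto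
    also have "\<dots> \<le> L"
    proof -
      have x4: "1 \<le> 4*x" using x st by linarith
      have "b \<le> b*(4*x)" using mult_left_mono[OF x4 b] by simp
      then show ?thesis unfolding L_def by simp
    qed
    finally have "(b*x) * exp (-(b*x)) \<le> L" .
    then have "0 \<le> exp (-b*x) + x * (exp (-b*x) * (-b)) + L"
    proof -
      assume h: "(b*x) * exp (-(b*x)) \<le> L"
      have "x * (exp (-b*x) * (-b)) = -((b*x) * exp (-(b*x)))" by simp
      moreover have "0 < exp (-b*x)" by simp
      ultimately show ?thesis using h by linarith
    qed
    with d show "\<exists>y. DERIV \<psi> x :> y \<and> 0 \<le> y" by blast
  next
    show "continuous_on {s..t} \<psi>" unfolding \<psi>_def by (intro continuous_intros)
  qed
  then show ?thesis unfolding \<psi>_def L_def by (simp add: algebra_simps)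
qed

lemma a_ge: "8 * real n \<le> a n"
proof -
  have "0 \<le> real n * (real n - 1)" by (cases n) auto
  then show ?thesis by (simp add: a_def q_def power2_eq_square algebra_simps)
qed

lemma aL_bound: "a n * exp (-pi * a n / 8) \<le> (8/pi) * exp (-pi/2) ^ n"
proof -
  define y where "y = pi * a n / 8"
  have y: "0 \<le> y" using a_nonneg[of n] by (simp add: y_def)
  have e1: "a n * exp (-pi * a n / 8) = (8/pi) * (y * exp (-y))" by (simp add: y_def)
  have e2: "y * exp (-y) \<le> exp (-y/2)" by (intro yexp_bound y)
  have e3: "exp (-y/2) \<le> exp (-pi/2 * real n)"
    using a_ge[of n] by (simp add: y_def)
  have e4: "exp (-pi/2 * real n) = exp (-pi/2) ^ n"
    by (subst exp_of_nat_mult[symmetric]) (simp add: algebra_simps)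
  have "y * exp (-y) \<le> exp (-pi/2) ^ n" using e2 e3 e4 by linarith
  then have "(8/pi) * (y * exp (-y)) \<le> (8/pi) * exp (-pi/2) ^ n" by (intro mult_left_mono) auto
  then show ?thesis using e1 by simp
qed

lemma summable_aL: "summable (\<lambda>n. a n * exp (-pi * a n / 8))"
proof (rule summable_comparison_test'[of "\<lambda>n. (8/pi) * exp (-pi/2) ^ n" 0])
  show "summable (\<lambda>n. (8/pi) * exp (-pi/2) ^ n)" by (intro summable_mult summable_geometric) auto
  fix n
  have "0 \<le> a n * exp (-pi * a n / 8)" using a_nonneg[of n] by simp
  then show "norm (a n * exp (-pi * a n / 8)) \<le> (8/pi) * exp (-pi/2) ^ n" using aL_bound by simp
qed

lemma C_lt1: "(\<Sum>n. a n * exp (-pi * a n / 8)) < 1"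
proof -
  define \<rho> where "\<rho> = exp (-pi/2)"
  have \<rho>: "0 < \<rho>" "\<rho> < 1" by (auto simp: \<rho>_def)
  have a0: "a 0 = 0" by (simp add: a_def q_def)
  have "(\<Sum>n. a n * exp (-pi * a n / 8)) = (\<Sum>n. a (Suc n) * exp (-pi * a (Suc n) / 8))"
    using suminf_split_head[OF summable_aL] a0 by simp
  also have "\<dots> \<le> (\<Sum>n. (8/pi*\<rho>) * \<rho> ^ n)"
  proof (rule suminf_le)
    show "summable (\<lambda>n. a (Suc n) * exp (-pi * a (Suc n) / 8))"
      using summable_Suc_iff[where f="\<lambda>n. a n * exp (-pi * a n / 8)"] summable_aL by simp
    show "summable (\<lambda>n. (8/pi*\<rho>) * \<rho> ^ n)" using \<rho> by (intro summable_mult summable_geometric) auto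
    fix n show "a (Suc n) * exp (-pi * a (Suc n) / 8) \<le> (8/pi*\<rho>) * \<rho> ^ n"
      using aL_bound[of "Suc n"] by (simp add: \<rho>_def)
  qed
  also have "\<dots> = (8/pi*\<rho>) * (1/(1-\<rho>))"
    using \<rho> by (intro sums_unique[symmetric] sums_mult) (simp add: geometric_sums)
  also have "\<dots> < 1"
  proof -
    have p: "3.14 \<le> pi" using pi_approx(1) by simp
    have "1 + pi/2 + (pi/2)^2/2 \<le> exp (pi/2)" by (rule exp_lower_Taylor_quadratic) simp
    have p2: "3.14^2 \<le> pi^2" using p by (intro power_mono) auto
    have p3: "3.14^3 \<le> pi^3" using p by (intro power_mono) auto
    have "1 + pi/2 + (pi/2)^2/2 \<le> exp (pi/2)" by (rule exp_lower_Taylor_quadratic) simp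
    moreover have "1/\<rho> = exp (pi/2)" by (simp add: \<rho>_def exp_minus inverse_eq_divide)
    moreover have "(pi/2)^2/2 = pi^2/8" by (simp add: power_divide)
    ultimately have e: "1 + pi/2 + pi^2/8 \<le> 1/\<rho>" by simp
    have "8 + pi < pi * (1 + pi/2 + pi^2/8)"
      using p p2 p3 by (simp add: power2_eq_square power3_eq_cube algebra_simps)
    also have "\<dots> \<le> pi * (1/\<rho>)" using e by (intro mult_left_mono) auto
    finally have "(8 + pi) * \<rho> < pi" using \<rho> by (simp add: field_simps)
    then show ?thesis using \<rho> by (simp add: field_simps)
  qed
  finally show ?thesis .
qed

lemma big_s:
  assumes st: "1/4 \<le> s" "s < t"
  shows "s * D s / T s < t * D t / T t"
proof -
  have s0: "0 < s" and t0: "0 < t" using st by auto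
  define Tv where "Tv x = (\<Sum>n. v n x)" for x
  define Av where "Av x = (\<Sum>n. a n * v n x)" for x
  define C where "C = (\<Sum>n. a n * exp (-pi * a n / 8))"
  have Tv1: "1 \<le> Tv t"
  proof -
    have "sum (\<lambda>n. v n t) {..<1} \<le> Tv t" unfolding Tv_def
      by (rule sum_le_suminf[OF summable_v[OF t0]]) (auto simp: less_imp_le v_pos)
    then show ?thesis by (simp add: v_def q_def)
  qed
  have Tvst: "Tv t \<le> Tv s" unfolding Tv_def
    by (rule suminf_le[OF _ summable_v[OF t0] summable_v[OF s0]])
       (use st a_nonneg in \<open>auto simp: v_def a_def[symmetric] intro!: mult_left_mono\<close>)
  have Av0: "0 \<le> Av s" unfolding Av_def
    by (intro suminf_nonneg summable_av s0) (simp add: a_nonneg v_pos less_imp_le)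
  have key: "s * Av s - t * Av t \<le> C * (t - s)"
  proof -
    have "s * Av s - t * Av t = (\<Sum>n. a n * (s * v n s - t * v n t))"
      unfolding Av_def
      using suminf_mult[OF summable_av[OF s0], of s] suminf_mult[OF summable_av[OF t0], of t]
        suminf_diff[OF summable_mult[OF summable_av[OF s0], of s] summable_mult[OF summable_av[OF t0], of t]]
      by (simp add: algebra_simps)
    also have "\<dots> \<le> (\<Sum>n. a n * exp (-pi * a n / 8) * (t - s))"
    proof (rule suminf_le)
      fix n
      have "s * v n s - t * v n t \<le> exp (-(pi * a n)/8) * (t - s)"
        using phi_lip[of s t "pi * a n"] st a_nonneg[of n] by (simp add: v_def a_def)
      then show "a n * (s * v n s - t * v n t) \<le> a n * exp (-pi * a n / 8) * (t - s)"
        using a_nonneg[of n] mult_left_mono by (fastforce simp: mult.assoc)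
      show "summable (\<lambda>n. a n * (s * v n s - t * v n t))"
        using summable_diff[OF summable_mult[OF summable_av[OF s0], of s] summable_mult[OF summable_av[OF t0], of t]]
        by (simp add: algebra_simps)
      show "summable (\<lambda>n. a n * exp (-pi * a n / 8) * (t - s))"
        by (intro summable_mult2 summable_aL)
    qed
    also have "\<dots> = C * (t - s)" unfolding C_def by (intro suminf_mult2[symmetric] summable_aL)
    finally show ?thesis .
  qed
  have Tvs: "0 < Tv s" using Tv1 Tvst by simp
  have "s * Av s / Tv s \<le> s * Av s / Tv t"
    using Av0 s0 Tv1 Tvst by (intro divide_left_mono) auto
  also have "s * Av s / Tv t - t * Av t / Tv t < t - s"
  proof -
    have eq: "s * Av s / Tv t - t * Av t / Tv t = (s * Av s - t * Av t) / Tv t" by (simp add: diff_divide_distrib)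
    show ?thesis
    proof (cases "s * Av s - t * Av t \<le> 0")
      case True
      then have "(s * Av s - t * Av t) / Tv t \<le> 0" using Tv1 by (simp add: divide_nonpos_pos)
      then show ?thesis using eq st by simp
    next
      case False
      then have "(s * Av s - t * Av t) / Tv t \<le> s * Av s - t * Av t"
        using Tv1 by (simp add: divide_le_eq)
      also have "\<dots> \<le> C * (t - s)" by (rule key)
      also have "\<dots> < t - s" using C_lt1 st unfolding C_def by simp
      finally show ?thesis using eq by simp
    qed
  qed
  ultimately have "s * Av s / Tv s < t - s + t * Av t / Tv t" by simp
  then show ?thesis using ratio_eq[OF s0] ratio_eq[OF t0] unfolding Tv_def Av_def by simp
qed


lemma D_ge_T: "T 1 \<le> D 1"
  unfolding T_def D_def
  by (rule suminf_le[OF _ summable_w summable_qw]) (use q_ge w_pos in \<open>auto intro: mult_right_mono[of 1, simplified] less_imp_le\<close>)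

theorem mainTheorem15:
  shows "(\<forall>s t. 1/4 \<le> s \<longrightarrow> s < t \<longrightarrow> h_fun t < h_fun s)
       \<and> (\<forall>s. 0 < s \<longrightarrow> s \<le> 1/4 \<longrightarrow> h_fun s \<ge> deriv theta_o 1 / theta_o 1)"
proof (intro conjI allI impI)
  fix s t :: real assume st: "1/4 \<le> s" "s < t"
  then have p: "0 < s" "0 < t" by auto
  have "pi * (s * D s / T s) < pi * (t * D t / T t)" using big_s[OF st] by (intro mult_strict_left_mono) auto
  then show "h_fun t < h_fun s" unfolding h_eq[OF p(1)] h_eq[OF p(2)] by linarith
next
  fix s :: real assume s: "0 < s" "s \<le> 1/4"
  have T1: "0 < T 1" by (rule T_pos) simp
  have Ts: "0 < T s" by (rule T_pos[OF s(1)])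
  have "s * D s / T s \<le> 1" using small_s[OF s] Ts by simp
  then have "pi * (s * D s / T s) \<le> pi * 1" by (intro mult_left_mono) auto
  then have a: "- pi \<le> h_fun s" unfolding h_eq[OF s(1)] by linarith
  have "1 \<le> D 1 / T 1" using D_ge_T T1 by simp
  then have "pi * 1 \<le> pi * (D 1 / T 1)" by (intro mult_left_mono) auto
  moreover have "deriv theta_o 1 / theta_o 1 = - pi * (1 * D 1 / T 1)"
    using h_eq[of 1] by (simp add: h_fun_def)
  ultimately have b: "deriv theta_o 1 / theta_o 1 \<le> - pi" by simp
  show "deriv theta_o 1 / theta_o 1 \<le> h_fun s" using a b by linarith
qed

end
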